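(* In the continuous Donation Game, assume additionally that $b$ is continuous and strictly increasing on $[0,K]$ (with inverse $b^{-1}:[0,b(K)]\to[0,K]$). Let $0\le\gamma\le b(K)-c(K)$, suppose $\lambda\ge c(K)/b(K)$, and let $x_0\in[0,K]$ satisfy $$\frac{\gamma-\lambda b(K)+c(K)}{1-\lambda}\le b(x_0)\le\frac{\gamma}{1-\lambda}.$$ Then $r^X(x,y):=b^{-1}\!\left(\frac{c(y)+\gamma-(1-\lambda)b(x_0)}{\lambda}\right)$ is well defined for all $x,y\in[0,K]$, and the deterministic memory-one strategy for $X$ with $\sigma_X^0=\delta_{x_0}$ and $\sigma_X[x,y]=\delta_{r^X(x,y)}$ enforces $\pi_Y=\gamma$ against every behavioral strategy of $Y$.
   Context: Continuous Donation Game: fix $K>0$ and measurable nondecreasing functions $b,c:[0,K]\to\mathbb{R}$ with $b(0)=c(0)=0$ and $b(s)>c(s)$ for $s>0$. Action spaces $S_X=S_Y=[0,K]$, payoffs $u_X(x,y)=b(y)-c(x)$, $u_Y(x,y)=b(x)-c(y)$, discount factor $\lambda\in(0,1)$. Repeated-game framework: histories $\mathcal{H}=\bigsqcup_T(S_X\times S_Y)^T$; a behavioral strategy is a Markov kernel from histories to the player's action space; a memory-one strategy for $X$ consists of an initial probability measure $\sigma_X^0$ and a Markov kernel $\sigma_X[x,y]$ applied to the previous action pair. The strategies generate, via $\mu_0=\sigma_X[\varnothing]\otimes\sigma_Y[\varnothing]$ and $\mu_t(E'\times E)=\int_{E'}(\sigma_X[h]\otimes\sigma_Y[h])(E)\,d\mu_{t-1}(h)$,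 the laws $\nu_t(E)=\mu_t(\mathcal{H}^t\times E)$ of the action pair at time $t$, and $\pi_X=(1-\lambda)\sum_t\lambda^t\int u_X\,d\nu_t$, $\pi_Y=(1-\lambda)\sum_t\lambda^t\int u_Y\,d\nu_t$. $\delta_s$ is the Dirac measure at $s$. *)

theory Defs
  imports "HOL-Probability.Probability"
begin

definition act_space :: "real \<Rightarrow> real measure" where
  "act_space K = restrict_space borel {0..K}"

definition pair_space :: "real \<Rightarrow> (real \<times> real) measure" where
  "pair_space K = act_space K \<Otimes>\<^sub>M act_space K"

definition hist_space :: "real \<Rightarrow> nat \<Rightarrow> (nat \<Rightarrow> real \<times> real) measure" where
  "hist_space K T = PiM {..<T} (\<lambda>_. pair_space K)"

text \<open>A behavioral strategy is a Markov kernel from histories to the action space.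
  Since the history space is a disjoint union, this is a family, indexed by the
  length T, of Markov kernels from histories of length T.\<close>
type_synonym strategy = "nat \<Rightarrow> (nat \<Rightarrow> real \<times> real) \<Rightarrow> real measure"

definition behavioral_strategy :: "real \<Rightarrow> strategy \<Rightarrow> bool" where
  "behavioral_strategy K \<sigma> \<longleftrightarrow>
     (\<forall>T. \<sigma> T \<in> measurable (hist_space K T) (prob_algebra (act_space K)))"

definition memory_one :: "real measure \<Rightarrow> (real \<Rightarrow> real \<Rightarrow> real measure) \<Rightarrow> strategy" where
  "memory_one s0 k T h = (case T of 0 \<Rightarrow> s0 | Suc n \<Rightarrow> k (fst (h n)) (snd (h n)))"

text \<open>mu K sX sY t: law of the history of length t+1.\<close>
primrec mu :: "real \<Rightarrow> strategy \<Rightarrow> strategy \<Rightarrow> nat \<Rightarrow> (nat \<Rightarrow> real \<times> real) measure" where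
  "mu K sX sY 0 =
     distr (sX 0 (\<lambda>_. undefined) \<Otimes>\<^sub>M sY 0 (\<lambda>_. undefined)) (hist_space K 1)
       (\<lambda>p. (\<lambda>i\<in>{..<1}. p))"
| "mu K sX sY (Suc t) =
     mu K sX sY t \<bind>
       (\<lambda>h. distr (sX (Suc t) h \<Otimes>\<^sub>M sY (Suc t) h) (hist_space K (Suc (Suc t)))
              (\<lambda>p. (\<lambda>i\<in>{..<Suc (Suc t)}. if i = Suc t then p else h i)))"

definition nu :: "real \<Rightarrow> strategy \<Rightarrow> strategy \<Rightarrow> nat \<Rightarrow> (real \<times> real) measure" where
  "nu K sX sY t = distr (mu K sX sY t) (pair_space K) (\<lambda>h. h t)"

definition payoff_X :: "(real \<Rightarrow> real) \<Rightarrow> (real \<Rightarrow> real) \<Rightarrow> real \<Rightarrow> real \<Rightarrow> strategy \<Rightarrow> strategy \<Rightarrow> real" where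
  "payoff_X b c lam K sX sY =
     (1 - lam) * (\<Sum>t. lam ^ t * (\<integral>p. b (snd p) - c (fst p) \<partial>nu K sX sY t))"

definition payoff_Y :: "(real \<Rightarrow> real) \<Rightarrow> (real \<Rightarrow> real) \<Rightarrow> real \<Rightarrow> real \<Rightarrow> strategy \<Rightarrow> strategy \<Rightarrow> real" where
  "payoff_Y b c lam K sX sY =
     (1 - lam) * (\<Sum>t. lam ^ t * (\<integral>p. b (fst p) - c (snd p) \<partial>nu K sX sY t))"

end

theory Submission
  imports Defs
begin

lemma space_act: "space (act_space K) = {0..K}"
  by (simp add: act_space_def space_restrict_space)

lemma space_hist: "space (hist_space K T) = PiE {..<T} (\<lambda>_. {0..K} \<times> {0..K})"
  by (simp add: hist_space_def space_PiM pair_space_def space_pair_measure space_act)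

lemma hist_mem: "h \<in> space (hist_space K T) \<Longrightarrow> i < T \<Longrightarrow> h i \<in> space (pair_space K)"
  unfolding hist_space_def space_PiM by (erule PiE_mem) simp

lemma kern_meas:
  assumes sX: "behavioral_strategy K sX" and sY: "behavioral_strategy K sY"
  shows "(\<lambda>h. distr (sX (Suc t) h \<Otimes>\<^sub>M sY (Suc t) h) (hist_space K (Suc (Suc t)))
              (\<lambda>p. (\<lambda>i\<in>{..<Suc (Suc t)}. if i = Suc t then p else h i)))
     \<in> hist_space K (Suc t) \<rightarrow>\<^sub>M prob_algebra (hist_space K (Suc (Suc t)))"
proof (rule measurable_distr_prob_space2)
  show "(\<lambda>h. sX (Suc t) h \<Otimes>\<^sub>M sY (Suc t) h) \<in> hist_space K (Suc t) \<rightarrow>\<^sub>M prob_algebra (pair_space K)"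
    unfolding pair_space_def
    using sX sY by (intro measurable_pair_prob) (auto simp: behavioral_strategy_def)
  show "(\<lambda>(h, p). \<lambda>i\<in>{..<Suc (Suc t)}. if i = Suc t then p else h i)
    \<in> hist_space K (Suc t) \<Otimes>\<^sub>M pair_space K \<rightarrow>\<^sub>M hist_space K (Suc (Suc t))"
    unfolding hist_space_def case_prod_beta
  proof (rule measurable_restrict)
    fix i assume i: "i \<in> {..<Suc (Suc t)}"
    show "(\<lambda>x. if i = Suc t then snd x else fst x i)
        \<in> PiM {..<Suc t} (\<lambda>_. pair_space K) \<Otimes>\<^sub>M pair_space K \<rightarrow>\<^sub>M pair_space K"
    proof (cases "i = Suc t")
      case True then show ?thesis by (simp add: measurable_snd)
    next
      case False
      then have "i \<in> {..<Suc t}" using i by auto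
      then show ?thesis using False
        by simp
    qed
  qed
qed

lemma mu_prob:
  assumes sX: "behavioral_strategy K sX" and sY: "behavioral_strategy K sY"
  shows "mu K sX sY t \<in> space (prob_algebra (hist_space K (Suc t)))"
proof (induction t)
  case 0
  have e: "(\<lambda>_. undefined) \<in> space (hist_space K 0)" by (simp add: space_hist)
  have a: "sX 0 (\<lambda>_. undefined) \<in> space (prob_algebra (act_space K))"
    by (rule measurable_space[OF sX[unfolded behavioral_strategy_def, rule_format, of 0] e])
  have b: "sY 0 (\<lambda>_. undefined) \<in> space (prob_algebra (act_space K))"
    by (rule measurable_space[OF sY[unfolded behavioral_strategy_def, rule_format, of 0] e])
  have p: "sX 0 (\<lambda>_. undefined) \<Otimes>\<^sub>M sY 0 (\<lambda>_. undefined) \<in> space (prob_algebra (pair_space K))"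
    using a b unfolding pair_space_def space_prob_algebra
    by (auto intro!: prob_space_pair sets_pair_measure_cong)
  have m: "(\<lambda>p. (\<lambda>i\<in>{..<1::nat}. p)) \<in> pair_space K \<rightarrow>\<^sub>M hist_space K 1"
    unfolding hist_space_def by (rule measurable_restrict) simp
  show ?case
    using measurable_space[OF measurable_distr_prob_space[OF m] p] by simp
next
  case (Suc t)
  show ?case
    using Suc kern_meas[OF sX sY, of t]
    by (simp add: space_prob_algebra prob_space_bind' sets_bind')
qed

lemma mu_sets:
  assumes sX: "behavioral_strategy K sX" and sY: "behavioral_strategy K sY"
  shows "sets (mu K sX sY t) = sets (hist_space K (Suc t))"
    and "space (mu K sX sY t) = space (hist_space K (Suc t))"
    and "prob_space (mu K sX sY t)"
proof -
  show 1: "sets (mu K sX sY t) = sets (hist_space K (Suc t))"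
    using mu_prob[OF sX sY, of t] by (auto simp: space_prob_algebra)
  show "space (mu K sX sY t) = space (hist_space K (Suc t))"
    by (rule sets_eq_imp_space_eq[OF 1])
  show "prob_space (mu K sX sY t)"
    using mu_prob[OF sX sY, of t] by (auto simp: space_prob_algebra)
qed

lemma strat_space:
  assumes sX: "behavioral_strategy K sX" and h: "h \<in> space (hist_space K T)"
  shows "sets (sX T h) = sets (act_space K)" "prob_space (sX T h)"
  using measurable_space[OF sX[unfolded behavioral_strategy_def, rule_format, of T] h]
  by (auto simp: space_prob_algebra)

lemma pair_strat:
  assumes sX: "behavioral_strategy K sX" and sY: "behavioral_strategy K sY"
    and h: "h \<in> space (hist_space K T)"
  shows "sets (sX T h \<Otimes>\<^sub>M sY T h) = sets (pair_space K)" "prob_space (sX T h \<Otimes>\<^sub>M sY T h)"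
  unfolding pair_space_def
   apply (rule sets_pair_measure_cong)
  using strat_space[OF sX h] strat_space[OF sY h] by (auto intro: prob_space_pair)

lemma int_nu:
  fixes f :: "real \<times> real \<Rightarrow> real"
  assumes sX: "behavioral_strategy K sX" and sY: "behavioral_strategy K sY"
    and f: "f \<in> borel_measurable (pair_space K)"
  shows "integral\<^sup>L (nu K sX sY t) f = (\<integral>h. f (h t) \<partial>mu K sX sY t)"
  unfolding nu_def
proof (rule integral_distr[OF _ f])
  have "(\<lambda>h. h t) \<in> hist_space K (Suc t) \<rightarrow>\<^sub>M pair_space K"
    unfolding hist_space_def by (rule measurable_component_singleton) simp
  then show "(\<lambda>h. h t) \<in> mu K sX sY t \<rightarrow>\<^sub>M pair_space K"
    unfolding measurable_cong_sets[OF mu_sets(1)[OF sX sY, of t] refl] .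
qed

lemma map_meas:
  assumes h: "h \<in> space (hist_space K (Suc t))"
  shows "(\<lambda>p. (\<lambda>i\<in>{..<Suc (Suc t)}. if i = Suc t then p else h i)) \<in> pair_space K \<rightarrow>\<^sub>M hist_space K (Suc (Suc t))"
  unfolding hist_space_def
proof (rule measurable_restrict)
  fix i assume i: "i \<in> {..<Suc (Suc t)}"
  show "(\<lambda>p. if i = Suc t then p else h i) \<in> pair_space K \<rightarrow>\<^sub>M pair_space K"
  proof (cases "i = Suc t")
    case False
    have "h i \<in> space (pair_space K)"
      using i False by (intro hist_mem[OF h]) simp
    note hi = this
    have eq: "(\<lambda>p. if i = Suc t then p else h i) = (\<lambda>p. h i)" using False by simp
    show ?thesis unfolding eq by (rule measurable_const[OF hi])
  next
    case True
    have eq: "(\<lambda>p. if i = Suc t then p else h i) = (\<lambda>p. p)" using True by simp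
    show ?thesis unfolding eq by simp
  qed
qed

lemma int_step:
  fixes g :: "real \<times> real \<Rightarrow> real"
  assumes sX: "behavioral_strategy K sX" and sY: "behavioral_strategy K sY"
    and g: "g \<in> borel_measurable (pair_space K)"
    and gB: "\<And>p. p \<in> space (pair_space K) \<Longrightarrow> \<bar>g p\<bar> \<le> B"
  shows "(\<integral>h. g (h (Suc t)) \<partial>mu K sX sY (Suc t))
     = (\<integral>h. (\<integral>p. g p \<partial>(sX (Suc t) h \<Otimes>\<^sub>M sY (Suc t) h)) \<partial>mu K sX sY t)"
proof -
  let ?N = "(\<lambda>h. distr (sX (Suc t) h \<Otimes>\<^sub>M sY (Suc t) h) (hist_space K (Suc (Suc t)))
              (\<lambda>p. (\<lambda>i\<in>{..<Suc (Suc t)}. if i = Suc t then p else h i)))"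
  have N: "?N \<in> mu K sX sY t \<rightarrow>\<^sub>M subprob_algebra (hist_space K (Suc (Suc t)))"
    unfolding measurable_cong_sets[OF mu_sets(1)[OF sX sY, of t] refl]
    by (rule measurable_prob_algebraD[OF kern_meas[OF sX sY, of t]])
  have gm: "(\<lambda>h. g (h (Suc t))) \<in> borel_measurable (hist_space K (Suc (Suc t)))"
  proof -
    have "(\<lambda>h. h (Suc t)) \<in> hist_space K (Suc (Suc t)) \<rightarrow>\<^sub>M pair_space K"
      unfolding hist_space_def by (rule measurable_component_singleton) simp
    then show ?thesis by (rule measurable_compose[OF _ g])
  qed
  have gb: "\<bar>g (x (Suc t))\<bar> \<le> B" if "x \<in> space (hist_space K (Suc (Suc t)))" for x
    by (intro gB hist_mem[OF that]) simp
  have fin: "finite_measure (mu K sX sY t)"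
    using mu_sets(3)[OF sX sY] by (simp add: prob_space_def)
  have ae: "AE x in mu K sX sY t. emeasure (?N x) (space (?N x)) \<le> ennreal 1"
  proof (rule AE_I2)
    fix x assume "x \<in> space (mu K sX sY t)"
    then have "x \<in> space (hist_space K (Suc t))" using mu_sets(2)[OF sX sY] by simp
    then have xh: "x \<in> space (hist_space K (Suc t))" .
    have mm: "(\<lambda>p. (\<lambda>i\<in>{..<Suc (Suc t)}. if i = Suc t then p else x i)) \<in> (sX (Suc t) x \<Otimes>\<^sub>M sY (Suc t) x) \<rightarrow>\<^sub>M hist_space K (Suc (Suc t))"
      using map_meas[OF xh] measurable_cong_sets[OF pair_strat(1)[OF sX sY xh] refl] by blast
    have pN: "prob_space (?N x)"
      by (rule prob_space.prob_space_distr[OF pair_strat(2)[OF sX sY xh] mm])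
    show "emeasure (?N x) (space (?N x)) \<le> ennreal 1"
      using prob_space.emeasure_space_1[OF pN] by simp
  qed
  have "(\<integral>h. g (h (Suc t)) \<partial>mu K sX sY (Suc t)) = (\<integral>h. (\<integral>h'. g (h' (Suc t)) \<partial>?N h) \<partial>mu K sX sY t)"
    apply (simp only: mu.simps)
    apply (rule integral_bind[where f="\<lambda>h. g (h (Suc t))" and K="hist_space K (Suc (Suc t))" and B=B and B'=1 and M="mu K sX sY t" and N="?N"])
        apply (rule gm)
       apply (erule gb)
      apply (rule N)
     apply (rule fin)
    apply (rule ae)
    done
  also have "\<dots> = (\<integral>h. (\<integral>p. g p \<partial>(sX (Suc t) h \<Otimes>\<^sub>M sY (Suc t) h)) \<partial>mu K sX sY t)"
  proof (rule Bochner_Integration.integral_cong[OF refl])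
    fix h assume "h \<in> space (mu K sX sY t)"
    then have h: "h \<in> space (hist_space K (Suc t))" using mu_sets(2)[OF sX sY] by simp
    have mm: "(\<lambda>p. (\<lambda>i\<in>{..<Suc (Suc t)}. if i = Suc t then p else h i)) \<in> (sX (Suc t) h \<Otimes>\<^sub>M sY (Suc t) h) \<rightarrow>\<^sub>M hist_space K (Suc (Suc t))"
      using map_meas[OF h] measurable_cong_sets[OF pair_strat(1)[OF sX sY h] refl] by blast
    show "(\<integral>h'. g (h' (Suc t)) \<partial>?N h) = (\<integral>p. g p \<partial>(sX (Suc t) h \<Otimes>\<^sub>M sY (Suc t) h))"
      by (subst integral_distr[OF mm gm]) simp
  qed
  finally show ?thesis .
qed

lemma geo_sum:
  fixes E F :: "nat \<Rightarrow> real"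
  assumes lam: "0 < lam" "lam < 1" and bE: "\<And>t. \<bar>E t\<bar> \<le> M" and bF: "\<And>t. \<bar>F t\<bar> \<le> M"
    and rec: "\<And>t. lam * E (Suc t) = F t + D"
  shows "(1 - lam) * (\<Sum>t. lam ^ t * (E t - F t)) = (1 - lam) * E 0 + D"
proof -
  have sg: "summable (\<lambda>t. M * lam ^ t)"
    using lam by (intro summable_mult summable_geometric) simp
  have sE: "summable (\<lambda>t. lam ^ t * E t)"
  proof (rule summable_comparison_test[OF _ sg], intro exI allI impI)
    fix n show "norm (lam ^ n * E n) \<le> M * lam ^ n"
      using bE[of n] lam by (simp add: abs_mult mult.commute mult_left_mono)
  qed
  have sF: "summable (\<lambda>t. lam ^ t * F t)"
  proof (rule summable_comparison_test[OF _ sg], intro exI allI impI)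
    fix n show "norm (lam ^ n * F n) \<le> M * lam ^ n"
      using bF[of n] lam by (simp add: abs_mult mult.commute mult_left_mono)
  qed
  have sG: "summable (\<lambda>t. lam ^ t)" using lam by (intro summable_geometric) simp
  have gs: "(\<Sum>t. lam ^ t) = 1 / (1 - lam)" using lam by (intro suminf_geometric) simp
  have "(\<Sum>t. lam ^ t * E t) - E 0 = (\<Sum>t. lam ^ Suc t * E (Suc t))"
    using suminf_split_head[OF sE] by simp
  also have "\<dots> = (\<Sum>t. lam ^ t * F t + D * lam ^ t)"
  proof (rule suminf_cong)
    fix t show "lam ^ Suc t * E (Suc t) = lam ^ t * F t + D * lam ^ t"
    proof -
      have "lam ^ t * (lam * E (Suc t)) = lam ^ t * (F t + D)" using rec[of t] by simp
      then show ?thesis by (simp add: algebra_simps)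
    qed
  qed
  also have "\<dots> = (\<Sum>t. lam ^ t * F t) + D * (\<Sum>t. lam ^ t)"
    using sF sG by (simp add: suminf_add[symmetric] suminf_mult summable_mult)
  finally have e: "(\<Sum>t. lam ^ t * E t) = E 0 + (\<Sum>t. lam ^ t * F t) + D / (1 - lam)"
    using gs by simp
  have "(\<Sum>t. lam ^ t * (E t - F t)) = (\<Sum>t. lam ^ t * E t) - (\<Sum>t. lam ^ t * F t)"
    using sE sF by (simp add: right_diff_distrib suminf_diff)
  then have "(\<Sum>t. lam ^ t * (E t - F t)) = E 0 + D / (1 - lam)" using e by linarith
  then show ?thesis using lam by (simp add: field_simps)
qed

lemma mu_int:
  fixes g :: "real \<times> real \<Rightarrow> real"
  assumes sX: "behavioral_strategy K sX" and sY: "behavioral_strategy K sY"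
    and g: "g \<in> borel_measurable (pair_space K)"
    and gb: "\<And>p. p \<in> space (pair_space K) \<Longrightarrow> lo \<le> g p \<and> g p \<le> hi"
  shows "integrable (mu K sX sY t) (\<lambda>h. g (h t))"
    and "lo \<le> (\<integral>h. g (h t) \<partial>mu K sX sY t)"
    and "(\<integral>h. g (h t) \<partial>mu K sX sY t) \<le> hi"
proof -
  interpret P: prob_space "mu K sX sY t" by (rule mu_sets(3)[OF sX sY])
  have m: "(\<lambda>h. g (h t)) \<in> borel_measurable (mu K sX sY t)"
    unfolding measurable_cong_sets[OF mu_sets(1)[OF sX sY, of t] refl]
  proof -
    have "(\<lambda>h. h t) \<in> hist_space K (Suc t) \<rightarrow>\<^sub>M pair_space K"
      unfolding hist_space_def by (rule measurable_component_singleton) simp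
    then show "(\<lambda>h. g (h t)) \<in> borel_measurable (hist_space K (Suc t))" by (rule measurable_compose[OF _ g])
  qed
  have sp: "h t \<in> space (pair_space K)" if "h \<in> space (mu K sX sY t)" for h
    using hist_mem[of h K "Suc t" t] that mu_sets(2)[OF sX sY, of t] by simp
  have ae: "AE h in mu K sX sY t. lo \<le> g (h t) \<and> g (h t) \<le> hi"
    using sp gb by (intro AE_I2) blast
  have ae2: "AE h in mu K sX sY t. norm (g (h t)) \<le> \<bar>lo\<bar> + \<bar>hi\<bar>"
    using ae by eventually_elim auto
  show i: "integrable (mu K sX sY t) (\<lambda>h. g (h t))"
    by (rule P.integrable_const_bound[OF ae2 m])
  show "lo \<le> (\<integral>h. g (h t) \<partial>mu K sX sY t)"
    using ae by (intro P.integral_ge_const[OF i]) (auto elim!: AE_mp)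
  show "(\<integral>h. g (h t) \<partial>mu K sX sY t) \<le> hi"
    using ae by (intro P.integral_le_const[OF i]) (auto elim!: AE_mp)
qed

lemma pair_return_fst:
  fixes f :: "real \<Rightarrow> real"
  assumes a: "a \<in> space M" and N: "prob_space N" and f: "f \<in> borel_measurable M"
  shows "(\<integral>p. f (fst p) \<partial>(return M a \<Otimes>\<^sub>M N)) = f a"
proof -
  have d: "distr (return M a \<Otimes>\<^sub>M N) (return M a) fst = return M a"
    by (rule prob_space.distr_pair_fst[OF N])
  have f': "f \<in> borel_measurable (return M a)"
    using f by (simp add: measurable_cong_sets[OF sets_return refl])
  have "(\<integral>p. f (fst p) \<partial>(return M a \<Otimes>\<^sub>M N)) = integral\<^sup>L (distr (return M a \<Otimes>\<^sub>M N) (return M a) fst) f"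
    by (rule integral_distr[symmetric, OF measurable_fst f'])
  also have "\<dots> = f a" unfolding d by (rule integral_return[OF a f])
  finally show ?thesis .
qed

theorem mainTheorem12:
  fixes K lam gamma x0 :: real and b c :: "real \<Rightarrow> real"
  assumes K_pos: "K > 0"
    and b_meas: "b \<in> borel_measurable (act_space K)"
    and c_meas: "c \<in> borel_measurable (act_space K)"
    and b_mono: "mono_on {0..K} b" and c_mono: "mono_on {0..K} c"
    and b0: "b 0 = 0" and c0: "c 0 = 0"
    and bc: "\<forall>s\<in>{0<..K}. b s > c s"
    and lam: "0 < lam" "lam < 1"
    and b_cont: "continuous_on {0..K} b"
    and b_strict: "strict_mono_on {0..K} b"
    and gamma: "0 \<le> gamma" "gamma \<le> b K - c K"
    and lam_ge: "lam \<ge> c K / b K"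
    and x0: "x0 \<in> {0..K}"
    and x0_lo: "(gamma - lam * b K + c K) / (1 - lam) \<le> b x0"
    and x0_hi: "b x0 \<le> gamma / (1 - lam)"
  shows "(\<forall>x\<in>{0..K}. \<forall>y\<in>{0..K}.
            (c y + gamma - (1 - lam) * b x0) / lam \<in> {0..b K})
       \<and> (let rX = (\<lambda>x y. the_inv_into {0..K} b ((c y + gamma - (1 - lam) * b x0) / lam));
              sX = memory_one (return (act_space K) x0) (\<lambda>x y. return (act_space K) (rX x y))
          in behavioral_strategy K sX
             \<and> (\<forall>sY. behavioral_strategy K sY \<longrightarrow> payoff_Y b c lam K sX sY = gamma))"
proof -
  let ?A = "act_space K"
  have K0: "0 \<le> K" using K_pos by simp
  have cK0: "0 \<le> c K" using mono_onD[OF c_mono, of 0 K] c0 K0 by simp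
  have bKc: "c K < b K" using bc K_pos by auto
  define D where "D = gamma - (1 - lam) * b x0"
  have "(1 - lam) * b x0 \<le> gamma" using x0_hi lam by (simp add: pos_le_divide_eq mult.commute)
  then have D0: "0 \<le> D" by (simp add: D_def)
  have "gamma - lam * b K + c K \<le> b x0 * (1 - lam)" using x0_lo lam by (simp add: pos_divide_le_eq)
  then have DK: "c K + D \<le> lam * b K" by (simp add: D_def algebra_simps)
  define q where "q = (\<lambda>y. (c y + D) / lam)"
  have cy: "0 \<le> c y \<and> c y \<le> c K" if "y \<in> {0..K}" for y
    using mono_onD[OF c_mono, of 0 y] mono_onD[OF c_mono, of y K] that c0 K0 by auto
  have by': "0 \<le> b y \<and> b y \<le> b K" if "y \<in> {0..K}" for y
    using mono_onD[OF b_mono, of 0 y] mono_onD[OF b_mono, of y K] that b0 K0 by auto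
  have q_rng: "q y \<in> {0..b K}" if "y \<in> {0..K}" for y
  proof -
    have "0 \<le> q y" using cy[OF that] D0 lam by (simp add: q_def)
    moreover have "c y + D \<le> lam * b K" using cy[OF that] DK by simp
    then have "q y \<le> b K" using lam by (simp add: q_def pos_divide_le_eq mult.commute)
    ultimately show ?thesis by simp
  qed
  have eqq: "(c y + gamma - (1 - lam) * b x0) / lam = q y" for y
    by (simp add: q_def D_def add_diff_eq)
  have inj: "inj_on b {0..K}" by (rule strict_mono_on_imp_inj_on[OF b_strict])
  have img: "b ` {0..K} = {0..b K}"
  proof
    show "b ` {0..K} \<subseteq> {0..b K}" using by' by auto
    show "{0..b K} \<subseteq> b ` {0..K}"
    proof
      fix y assume y: "y \<in> {0..b K}"
      then obtain x where "0 \<le> x" "x \<le> K" "b x = y"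
        using IVT'[of b 0 y K, OF _ _ K0 b_cont] b0 by auto
      then show "y \<in> b ` {0..K}" by auto
    qed
  qed
  define r where "r = (\<lambda>y. the_inv_into {0..K} b (q y))"
  have r_in: "r y \<in> {0..K}" if "y \<in> {0..K}" for y
    unfolding r_def using q_rng[OF that] img by (intro the_inv_into_into[OF inj]) auto
  have br: "b (r y) = q y" if "y \<in> {0..K}" for y
    unfolding r_def using q_rng[OF that] img by (intro f_the_inv_into_f[OF inj]) auto
  have spA: "space ?A = {0..K}" by (rule space_act)
  have qb: "q \<in> borel_measurable ?A"
    unfolding q_def using c_meas by simp
  have qm: "q \<in> ?A \<rightarrow>\<^sub>M restrict_space borel {0..b K}"
    by (rule measurable_restrict_space2) (use q_rng spA qb in auto)
  have ti_cont: "continuous_on {0..b K} (the_inv_into {0..K} b)"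
    using continuous_on_inv_into[OF b_cont compact_Icc inj] img by simp
  have tm: "the_inv_into {0..K} b \<in> borel_measurable (restrict_space borel {0..b K})"
    by (rule borel_measurable_continuous_on_restrict[OF ti_cont])
  have rb: "r \<in> borel_measurable ?A"
    unfolding r_def using measurable_compose[OF qm tm] by simp
  have r_meas: "r \<in> ?A \<rightarrow>\<^sub>M ?A"
    apply (subst (2) act_space_def)
    by (rule measurable_restrict_space2) (use r_in spA rb in auto)
  have sXeq: "memory_one (return ?A x0) (\<lambda>x y. return ?A (the_inv_into {0..K} b ((c y + gamma - (1 - lam) * b x0) / lam)))
      = memory_one (return ?A x0) (\<lambda>x y. return ?A (r y))"
    by (simp add: r_def eqq)
  define sX where "sX = memory_one (return ?A x0) (\<lambda>x y. return ?A (r y))"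
  have sX0: "sX 0 = (\<lambda>h. return ?A x0)" by (rule ext) (simp add: sX_def memory_one_def)
  have sXS: "sX (Suc n) = (\<lambda>h. return ?A (r (snd (h n))))" for n
    by (rule ext) (simp add: sX_def memory_one_def)
  have x0A: "x0 \<in> space ?A" using x0 spA by simp
  have fstm: "fst \<in> pair_space K \<rightarrow>\<^sub>M ?A" unfolding pair_space_def by (rule measurable_fst)
  have sndm: "snd \<in> pair_space K \<rightarrow>\<^sub>M ?A" unfolding pair_space_def by (rule measurable_snd)
  have compm: "(\<lambda>h. h n) \<in> hist_space K (Suc n) \<rightarrow>\<^sub>M pair_space K" for n
    unfolding hist_space_def by (rule measurable_component_singleton) simp
  have behav: "behavioral_strategy K sX"
    unfolding behavioral_strategy_def
  proof
    fix T show "sX T \<in> hist_space K T \<rightarrow>\<^sub>M prob_algebra ?A"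
    proof (cases T)
      case 0
      have "return ?A x0 \<in> space (prob_algebra ?A)"
        by (rule measurable_space[OF measurable_return_prob_space x0A])
      then show ?thesis unfolding 0 sX0 by (rule measurable_const)
    next
      case (Suc n)
      have "(\<lambda>h. r (snd (h n))) \<in> hist_space K (Suc n) \<rightarrow>\<^sub>M ?A"
        using measurable_compose[OF measurable_compose[OF compm sndm] r_meas] by simp
      then show ?thesis unfolding Suc sXS
        by (rule measurable_compose[OF _ measurable_return_prob_space])
    qed
  qed
  have pay: "payoff_Y b c lam K sX sY = gamma" if sY: "behavioral_strategy K sY" for sY
  proof -
    define E where "E = (\<lambda>t. \<integral>h. b (fst (h t)) \<partial>mu K sX sY t)"
    define F where "F = (\<lambda>t. \<integral>h. c (snd (h t)) \<partial>mu K sX sY t)"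
    have bm: "(\<lambda>p. b (fst p)) \<in> borel_measurable (pair_space K)"
      using measurable_compose[OF fstm b_meas] by simp
    have cm: "(\<lambda>p. c (snd p)) \<in> borel_measurable (pair_space K)"
      using measurable_compose[OF sndm c_meas] by simp
    have psp: "fst p \<in> {0..K} \<and> snd p \<in> {0..K}" if "p \<in> space (pair_space K)" for p
      using that by (auto simp: pair_space_def space_pair_measure spA)
    have bb: "0 \<le> b (fst p) \<and> b (fst p) \<le> b K" if "p \<in> space (pair_space K)" for p
      using by' psp[OF that] by blast
    have cb: "0 \<le> c (snd p) \<and> c (snd p) \<le> c K" if "p \<in> space (pair_space K)" for p
      using cy psp[OF that] by blast
    note bI = mu_int[OF behav sY bm bb]
    note cI = mu_int[OF behav sY cm cb]
    have Eb: "\<bar>E t\<bar> \<le> b K + c K" for t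
      using bI(2)[of t] bI(3)[of t] cK0 by (simp add: E_def)
    have Fb: "\<bar>F t\<bar> \<le> b K + c K" for t
      using cI(2)[of t] cI(3)[of t] cK0 bKc by (simp add: F_def)
    have G: "(\<integral>p. b (fst p) - c (snd p) \<partial>nu K sX sY t) = E t - F t" for t
    proof -
      have "(\<lambda>p. b (fst p) - c (snd p)) \<in> borel_measurable (pair_space K)"
        using bm cm by simp
      then show ?thesis
        by (simp add: int_nu[OF behav sY] E_def F_def bI(1) cI(1))
    qed
    have E0: "E 0 = b x0"
    proof -
      let ?u = "(\<lambda>_. undefined) :: nat \<Rightarrow> real \<times> real"
      have u: "?u \<in> space (hist_space K 0)" by (simp add: space_hist)
      have m0: "(\<lambda>p. (\<lambda>i\<in>{..<1::nat}. p)) \<in> (sX 0 ?u \<Otimes>\<^sub>M sY 0 ?u) \<rightarrow>\<^sub>M hist_space K 1"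
        unfolding measurable_cong_sets[OF pair_strat(1)[OF behav sY u] refl]
        unfolding hist_space_def by (rule measurable_restrict) simp
      have gm0: "(\<lambda>h. b (fst (h 0))) \<in> borel_measurable (hist_space K 1)"
        using measurable_compose[OF compm[of 0] bm] by simp
      have "E 0 = (\<integral>p. b (fst p) \<partial>(sX 0 ?u \<Otimes>\<^sub>M sY 0 ?u))"
        unfolding E_def mu.simps by (subst integral_distr[OF m0 gm0]) simp
      also have "\<dots> = b x0"
        unfolding sX0 by (rule pair_return_fst[OF x0A strat_space(2)[OF sY u] b_meas])
      finally show ?thesis .
    qed
    have rec: "lam * E (Suc t) = F t + D" for t
    proof -
      have "E (Suc t) = (\<integral>h. (\<integral>p. b (fst p) \<partial>(sX (Suc t) h \<Otimes>\<^sub>M sY (Suc t) h)) \<partial>mu K sX sY t)"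
        unfolding E_def by (rule int_step[OF behav sY bm, of "b K"]) (use bb in auto)
      also have "\<dots> = (\<integral>h. (c (snd (h t)) + D) / lam \<partial>mu K sX sY t)"
      proof (rule Bochner_Integration.integral_cong[OF refl])
        fix h assume "h \<in> space (mu K sX sY t)"
        then have h: "h \<in> space (hist_space K (Suc t))" using mu_sets(2)[OF behav sY] by simp
        have ht: "h t \<in> space (pair_space K)"
          by (intro hist_mem[OF h]) simp
        have y: "snd (h t) \<in> {0..K}" using psp[OF ht] by simp
        have "(\<integral>p. b (fst p) \<partial>(sX (Suc t) h \<Otimes>\<^sub>M sY (Suc t) h)) = b (r (snd (h t)))"
          unfolding sXS
          by (rule pair_return_fst[OF _ strat_space(2)[OF sY h] b_meas]) (use r_in[OF y] spA in simp)
        also have "\<dots> = (c (snd (h t)) + D) / lam" using br[OF y] by (simp add: q_def)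
        finally show "(\<integral>p. b (fst p) \<partial>(sX (Suc t) h \<Otimes>\<^sub>M sY (Suc t) h)) = (c (snd (h t)) + D) / lam" .
      qed
      also have "\<dots> = (F t + D) / lam"
      proof -
        interpret P: prob_space "mu K sX sY t" by (rule mu_sets(3)[OF behav sY])
        show ?thesis
          using cI(1)[of t] by (simp add: F_def P.prob_space)
      qed
      finally show ?thesis using lam by simp
    qed
    have "payoff_Y b c lam K sX sY = (1 - lam) * (\<Sum>t. lam ^ t * (E t - F t))"
      unfolding payoff_Y_def G ..
    also have "\<dots> = (1 - lam) * E 0 + D"
      by (rule geo_sum[where E=E and F=F and M="b K + c K" and D=D, OF lam Eb Fb rec])
    also have "\<dots> = gamma" by (simp add: E0 D_def)
    finally show ?thesis .
  qed
  show ?thesis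
    unfolding Let_def sXeq sX_def[symmetric]
    using q_rng eqq behav pay by auto
qed

end
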